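(* Let $\rho>0$ and suppose that, for each value of $c^S>0$, the variable-window IPT thresholds satisfy $c_n^D=0$ for all $n\leq(1+\rho)\frac{c^S}{\underline{q}}$ (the values $c_n^D\geq0$ for larger $n$ being arbitrary). Then $$\limsup_{c^S\to\infty}\frac{\mathrm{WADD}(t_I)}{c^S}\leq\frac{2}{\underline{q}}.$$
   Context: Setup. Let $\mathcal{A}=\{a_1,\dots,a_m\}$ be a finite alphabet and $\mathcal{P}$ the set of probability mass functions (p.m.f.s) on $\mathcal{A}$. $I(f\|f')=\sum_{a}f(a)\log\frac{f(a)}{f'(a)}$ is the Kullback–Leibler divergence. A known pre-change p.m.f. $f_0\in\mathcal{P}$ is fixed. $q:\mathcal{P}\to\mathbb{R}$ is quasiconcave and $L$-Lipschitz with respect to $\ell_1$, with $q_0:=q(f_0)<0<\underline{q}$, and the set of possible post-change p.m.f.s $\mathcal{P}_1$ is a nonempty subset of $\{f: q(f)\geq\underline{q}\}$. Under $P_{f_1,t_1}$ (expectation $E_{f_1,t_1}$), $X_1,\dots,X_{t_1-1}$ are i.i.d. $f_0$ and $X_{t_1},X_{t_1+1},\dots$ are i.i.d. $f_1$, independent of the former. For $i\leq j$, $\hat f_{X_i^j}$ is the empirical p.m.f. of $X_i,\dots,X_j$. $(x)^+=\max\{x,0\}$. For a stopping time $t$, the worst average detection delay is $\mathrm{WADD}(t)=\sup_{f_1\in\mathcal{P}_1,\,t_1\geq1}\operatorname{ess\,sup}_{X_1^{t_1-1}}E_{f_1,t_1}\left((t-t_1+1)^+\mid X_1^{t_1-1}\right)$.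 Variable-window IPT. Parameters: $c^S>0$ and a sequence $(c_n^D)_{n\geq1}$ of nonnegative thresholds. For $n\geq1$ let $f_n^*=\arg\min_{f\in\mathcal{P}:\,q(f)\geq c^S/n}I(f\|f_0)$. Put $Q(i,j)=(j-i+1)q(\hat f_{X_i^j})$ for $i\leq j$ and $Q(j+1,j)=0$. Set $\tau_1=1$ and for $k\geq1$: $S_k=\max_{\tau_k\leq i\leq k+1}Q(i,k)$, with $i_k$ a maximizing index and $n_k=k-i_k+1$; $D_k=I(\hat f_{X_{i_k}^k}\|f_{n_k}^* )$; $\tau_{k+1}=k+1$ if $S_k\geq c^S$ and $D_k<c^D_{n_k}$ (restart), and $\tau_{k+1}=\tau_k$ otherwise. The IPT stopping time is $t_I=\inf\{k: S_k\geq c^S\text{ and }D_k\geq c^D_{n_k}\}$. *)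

theory Defs
  imports "HOL-Probability.Probability"
begin

definition KL :: "'a::finite pmf \<Rightarrow> 'a pmf \<Rightarrow> ereal" where
  "KL f g = (\<Sum>a\<in>UNIV. if pmf f a = 0 then 0
                       else if pmf g a = 0 then \<infinity>
                       else ereal (pmf f a * ln (pmf f a / pmf g a)))"

definition quasiconcave_pmf :: "('a pmf \<Rightarrow> real) \<Rightarrow> bool" where
  "quasiconcave_pmf q \<longleftrightarrow>
     (\<forall>f g h (\<theta>::real). 0 \<le> \<theta> \<and> \<theta> \<le> 1 \<and>
        (\<forall>a. pmf h a = \<theta> * pmf f a + (1 - \<theta>) * pmf g a)
        \<longrightarrow> min (q f) (q g) \<le> q h)"

definition lipschitz_l1_pmf :: "real \<Rightarrow> ('a::finite pmf \<Rightarrow> real) \<Rightarrow> bool" where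
  "lipschitz_l1_pmf L q \<longleftrightarrow>
     (\<forall>f g. \<bar>q f - q g\<bar> \<le> L * (\<Sum>a\<in>UNIV. \<bar>pmf f a - pmf g a\<bar>))"

definition emp :: "(nat \<Rightarrow> 'a) \<Rightarrow> nat \<Rightarrow> nat \<Rightarrow> 'a pmf" where
  "emp X i j = pmf_of_multiset (mset (map X [i..<Suc j]))"

(* Q(i,j) = (j-i+1) q(emp); equals 0 for i = j+1 *)
definition Qv :: "('a pmf \<Rightarrow> real) \<Rightarrow> (nat \<Rightarrow> 'a) \<Rightarrow> nat \<Rightarrow> nat \<Rightarrow> real" where
  "Qv q X i j = real (Suc j - i) * q (emp X i j)"

(* f^*_n = argmin { I(f||f0) : q(f) \<ge> c^S/n }; here c = c^S/n.
   If no minimiser exists we fall back to f0 (convention). *)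
definition fstar :: "('a::finite pmf \<Rightarrow> real) \<Rightarrow> 'a pmf \<Rightarrow> real \<Rightarrow> 'a pmf" where
  "fstar q f0 c = (if \<exists>f. is_arg_min (\<lambda>f. KL f f0) (\<lambda>f. c \<le> q f) f
                   then arg_min (\<lambda>f. KL f f0) (\<lambda>f. c \<le> q f) else f0)"

definition ipt_i :: "('a pmf \<Rightarrow> real) \<Rightarrow> (nat \<Rightarrow> 'a) \<Rightarrow> nat \<Rightarrow> nat \<Rightarrow> nat" where
  "ipt_i q X tau k = (SOME i. tau \<le> i \<and> i \<le> Suc k \<and>
        (\<forall>j. tau \<le> j \<and> j \<le> Suc k \<longrightarrow> Qv q X j k \<le> Qv q X i k))"

definition ipt_S :: "('a pmf \<Rightarrow> real) \<Rightarrow> (nat \<Rightarrow> 'a) \<Rightarrow> nat \<Rightarrow> nat \<Rightarrow> real" where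
  "ipt_S q X tau k = Qv q X (ipt_i q X tau k) k"

definition ipt_n :: "('a pmf \<Rightarrow> real) \<Rightarrow> (nat \<Rightarrow> 'a) \<Rightarrow> nat \<Rightarrow> nat \<Rightarrow> nat" where
  "ipt_n q X tau k = Suc k - ipt_i q X tau k"

definition ipt_D :: "('a::finite pmf \<Rightarrow> real) \<Rightarrow> 'a pmf \<Rightarrow> real \<Rightarrow> (nat \<Rightarrow> 'a) \<Rightarrow> nat \<Rightarrow> nat \<Rightarrow> ereal" where
  "ipt_D q f0 cS X tau k =
     KL (emp X (ipt_i q X tau k) k) (fstar q f0 (cS / real (ipt_n q X tau k)))"

(* restart times tau_k (tau_1 = 1; tau 0 is a dummy) *)
fun ipt_tau :: "('a::finite pmf \<Rightarrow> real) \<Rightarrow> 'a pmf \<Rightarrow> real \<Rightarrow> (nat \<Rightarrow> real) \<Rightarrow> (nat \<Rightarrow> 'a) \<Rightarrow> nat \<Rightarrow> nat" where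
  "ipt_tau q f0 cS cD X 0 = 1"
| "ipt_tau q f0 cS cD X (Suc k) =
     (let t = ipt_tau q f0 cS cD X k in
      if 1 \<le> k \<and> cS \<le> ipt_S q X t k \<and> ipt_D q f0 cS X t k < ereal (cD (ipt_n q X t k))
      then Suc k else t)"

definition ipt_stop :: "('a::finite pmf \<Rightarrow> real) \<Rightarrow> 'a pmf \<Rightarrow> real \<Rightarrow> (nat \<Rightarrow> real) \<Rightarrow> (nat \<Rightarrow> 'a) \<Rightarrow> nat \<Rightarrow> bool" where
  "ipt_stop q f0 cS cD X k \<longleftrightarrow>
     (let t = ipt_tau q f0 cS cD X k in
      1 \<le> k \<and> cS \<le> ipt_S q X t k \<and> ereal (cD (ipt_n q X t k)) \<le> ipt_D q f0 cS X t k)"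

definition tI :: "('a::finite pmf \<Rightarrow> real) \<Rightarrow> 'a pmf \<Rightarrow> real \<Rightarrow> (nat \<Rightarrow> real) \<Rightarrow> (nat \<Rightarrow> 'a) \<Rightarrow> enat" where
  "tI q f0 cS cD X = (if \<exists>k. ipt_stop q f0 cS cD X k
                       then enat (LEAST k. ipt_stop q f0 cS cD X k) else \<infinity>)"

definition delay :: "enat \<Rightarrow> nat \<Rightarrow> ennreal" where
  "delay t t1 = (case t of enat k \<Rightarrow> of_nat (Suc k - t1) | \<infinity> \<Rightarrow> \<infinity>)"

(* Given X_1^{t1-1} = x (a prefix of positive
   f0-probability), the post-change samples X_{t1}, X_{t1+1}, ... are i.i.d. f1
   and independent of the prefix, so the conditional expectation is the
   expectation over Y ~ f1^{\<infinity>} with X = x on {1..t1-1} and X = Y from t1 on;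
   the essential supremum over the prefix is the supremum over prefixes
   of positive probability (finite alphabet). *)
definition WADD :: "'a pmf \<Rightarrow> 'a pmf set \<Rightarrow> ((nat \<Rightarrow> 'a) \<Rightarrow> enat) \<Rightarrow> ennreal" where
  "WADD f0 P1 T =
    (SUP p \<in> {(f1, t1, x). f1 \<in> P1 \<and> 1 \<le> t1 \<and> (\<forall>l. 1 \<le> l \<and> l < t1 \<longrightarrow> 0 < pmf f0 (x l))}.
       (case p of (f1, t1, x) \<Rightarrow>
          \<integral>\<^sup>+ Y. delay (T (\<lambda>l. if l < t1 then x l else Y l)) t1
             \<partial>(PiM (UNIV :: nat set) (\<lambda>_. measure_pmf f1))))"

end

theory Submission
  imports Defs
begin


lemma KL_nonneg: "0 \<le> KL (f::'a::finite pmf) g"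
proof -
  have "ereal (pmf f a - pmf g a) \<le> (if pmf f a = 0 then 0
                       else if pmf g a = 0 then \<infinity>
                       else ereal (pmf f a * ln (pmf f a / pmf g a)))" for a
  proof (cases "pmf f a = 0")
    case True then show ?thesis by (simp add: pmf_nonneg)
  next
    case F: False
    show ?thesis
    proof (cases "pmf g a = 0")
      case True then show ?thesis using F by simp
    next
      case False
      have fp: "pmf f a > 0" using F pmf_nonneg[of f a] by linarith
      have gp: "pmf g a > 0" using False pmf_nonneg[of g a] by linarith
      have "ln (pmf g a / pmf f a) \<le> pmf g a / pmf f a - 1"
        by (rule ln_le_minus_one) (use fp gp in simp)
      moreover have "ln (pmf f a / pmf g a) = - ln (pmf g a / pmf f a)"
        using fp gp by (simp add: ln_div)
      ultimately have "1 - pmf g a / pmf f a \<le> ln (pmf f a / pmf g a)" by linarith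
      then have "pmf f a * (1 - pmf g a / pmf f a) \<le> pmf f a * ln (pmf f a / pmf g a)"
        using fp by (intro mult_left_mono) auto
      moreover have "pmf f a * (1 - pmf g a / pmf f a) = pmf f a - pmf g a"
        using fp by (simp add: right_diff_distrib)
      ultimately have "pmf f a - pmf g a \<le> pmf f a * ln (pmf f a / pmf g a)"
        by simp
      then show ?thesis using F False by simp
    qed
  qed
  then have "(\<Sum>a\<in>UNIV. ereal (pmf f a - pmf g a)) \<le> KL f g"
    unfolding KL_def by (rule sum_mono)
  moreover have "(\<Sum>a\<in>UNIV. ereal (pmf f a - pmf g a)) = ereal ((\<Sum>a\<in>UNIV. pmf f a) - (\<Sum>a\<in>UNIV. pmf g a))"
    by (simp add: sum_subtractf)
  moreover have "(\<Sum>a\<in>UNIV. pmf f a) = 1" "(\<Sum>a\<in>UNIV. pmf g a) = 1"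
    by (simp_all add: sum_pmf_eq_1)
  ultimately have "ereal 0 \<le> KL f g" by simp
  then show ?thesis by (simp add: zero_ereal_def)
qed



lemma tau_ge1: "1 \<le> ipt_tau q f0 cS cD X k"
  by (induction k) (auto simp: Let_def)

lemma tau_le: "1 \<le> k \<Longrightarrow> ipt_tau q f0 cS cD X k \<le> k"
proof (induction k)
  case 0 then show ?case by simp
next
  case (Suc k)
  show ?case
  proof (cases "k = 0")
    case True then show ?thesis by (simp add: Let_def)
  next
    case False then show ?thesis using Suc by (auto simp: Let_def)
  qed
qed

lemma i_prop:
  assumes "tau \<le> Suc k"
  shows "tau \<le> ipt_i q X tau k \<and> ipt_i q X tau k \<le> Suc k \<and>
         (\<forall>j. tau \<le> j \<and> j \<le> Suc k \<longrightarrow> Qv q X j k \<le> Qv q X (ipt_i q X tau k) k)"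
proof -
  have fin: "finite ((\<lambda>j. Qv q X j k) ` {tau..Suc k})" by simp
  have ne: "(\<lambda>j. Qv q X j k) ` {tau..Suc k} \<noteq> {}" using assms by auto
  obtain i where i: "i \<in> {tau..Suc k}" "Qv q X i k = Max ((\<lambda>j. Qv q X j k) ` {tau..Suc k})"
    using Max_in[OF fin ne] by auto
  have "\<exists>i. tau \<le> i \<and> i \<le> Suc k \<and>
        (\<forall>j. tau \<le> j \<and> j \<le> Suc k \<longrightarrow> Qv q X j k \<le> Qv q X i k)"
    using i Max_ge[OF fin] by (intro exI[of _ i]) auto
  then show ?thesis unfolding ipt_i_def by (rule someI_ex)
qed

lemma S_ge: "tau \<le> j \<Longrightarrow> j \<le> Suc k \<Longrightarrow> Qv q X j k \<le> ipt_S q X tau k"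
  unfolding ipt_S_def using i_prop[of tau k q X] by auto

lemma tau_restart:
  "1 \<le> k \<Longrightarrow> cS \<le> ipt_S q X (ipt_tau q f0 cS cD X k) k \<Longrightarrow> \<not> ipt_stop q f0 cS cD X k
   \<Longrightarrow> ipt_tau q f0 cS cD X (Suc k) = Suc k"
  unfolding ipt_stop_def by (auto simp: Let_def not_le)

lemma tau_same:
  "ipt_S q X (ipt_tau q f0 cS cD X k) k < cS \<Longrightarrow> ipt_tau q f0 cS cD X (Suc k) = ipt_tau q f0 cS cD X k"
  by (auto simp: Let_def)

lemma stop_small:
  assumes k: "1 \<le> k" and cS: "0 < cS" and S: "cS \<le> ipt_S q X (ipt_tau q f0 cS cD X k) k"
    and cDz: "\<And>n. 1 \<le> n \<Longrightarrow> n \<le> NB \<Longrightarrow> cD n \<le> 0"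
    and w: "Suc k - ipt_tau q f0 cS cD X k \<le> NB"
  shows "ipt_stop q f0 cS cD X k"
proof -
  let ?t = "ipt_tau q f0 cS cD X k"
  have tl: "?t \<le> Suc k" using tau_le[OF k, of q f0 cS cD X] by simp
  note ip = i_prop[OF tl, of q X]
  have ne: "ipt_i q X ?t k \<noteq> Suc k"
  proof
    assume "ipt_i q X ?t k = Suc k"
    then have "ipt_S q X ?t k = 0" unfolding ipt_S_def Qv_def by simp
    with S cS show False by simp
  qed
  have n1: "1 \<le> ipt_n q X ?t k" unfolding ipt_n_def using ip ne by auto
  have n2: "ipt_n q X ?t k \<le> NB" unfolding ipt_n_def using ip w by auto
  have "ereal (cD (ipt_n q X ?t k)) \<le> 0" using cDz[OF n1 n2] by (simp add: zero_ereal_def)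
  also have "0 \<le> ipt_D q f0 cS X ?t k" unfolding ipt_D_def by (rule KL_nonneg)
  finally show ?thesis unfolding ipt_stop_def using k S by (simp add: Let_def)
qed

lemma tau_stable:
  assumes "k0 \<le> k" "\<forall>k'. k0 \<le> k' \<and> k' < k \<longrightarrow> ipt_S q X (ipt_tau q f0 cS cD X k') k' < cS"
  shows "ipt_tau q f0 cS cD X k = ipt_tau q f0 cS cD X k0"
  using assms
proof (induction k rule: dec_induct)
  case base then show ?case by simp
next
  case (step k)
  then have "ipt_tau q f0 cS cD X k = ipt_tau q f0 cS cD X k0" by auto
  moreover have "ipt_S q X (ipt_tau q f0 cS cD X k) k < cS" using step by auto
  ultimately show ?case using tau_same by metis
qed

lemma crossing:
  assumes k0: "1 \<le> k0" and ts: "ipt_tau q f0 cS cD X k0 \<le> s" and ke: "k0 \<le> e"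
    and se: "s \<le> Suc e" and Q: "cS \<le> Qv q X s e"
  shows "\<exists>r. k0 \<le> r \<and> r \<le> e \<and> cS \<le> ipt_S q X (ipt_tau q f0 cS cD X r) r
             \<and> ipt_tau q f0 cS cD X r = ipt_tau q f0 cS cD X k0"
proof -
  define P where "P r \<longleftrightarrow> k0 \<le> r \<and> cS \<le> ipt_S q X (ipt_tau q f0 cS cD X r) r" for r
  have ex: "\<exists>r. r \<le> e \<and> P r"
  proof (rule ccontr)
    assume "\<not> ?thesis"
    then have "\<forall>k'. k0 \<le> k' \<and> k' < e \<longrightarrow> ipt_S q X (ipt_tau q f0 cS cD X k') k' < cS"
      unfolding P_def by (metis less_imp_le not_le)
    then have "ipt_tau q f0 cS cD X e = ipt_tau q f0 cS cD X k0" using tau_stable[OF ke] by blast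
    then have "Qv q X s e \<le> ipt_S q X (ipt_tau q f0 cS cD X e) e" using S_ge ts se by metis
    then have "P e" using Q ke unfolding P_def by simp
    with \<open>\<not> ?thesis\<close> show False by auto
  qed
  define r where "r = (LEAST r. P r)"
  have Pr: "P r" unfolding r_def using ex by (metis LeastI)
  have re: "r \<le> e" using ex unfolding r_def by (metis Least_le le_trans)
  have "\<forall>k'. k0 \<le> k' \<and> k' < r \<longrightarrow> ipt_S q X (ipt_tau q f0 cS cD X k') k' < cS"
  proof (intro allI impI)
    fix k' assume "k0 \<le> k' \<and> k' < r"
    then have "\<not> P k'" using not_less_Least[of k' P] unfolding r_def by blast
    then show "ipt_S q X (ipt_tau q f0 cS cD X k') k' < cS" using \<open>k0 \<le> k' \<and> k' < r\<close>
      unfolding P_def by auto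
  qed
  then have "ipt_tau q f0 cS cD X r = ipt_tau q f0 cS cD X k0"
    using tau_stable Pr unfolding P_def by blast
  then show ?thesis using Pr re unfolding P_def by blast
qed



lemma count_map_upt: "count (mset (map X [i..<j])) a = card {l\<in>{i..<j}. X l = a}"
proof (induction j)
  case 0 then show ?case by simp
next
  case (Suc j)
  show ?case
  proof (cases "i \<le> j")
    case True
    have e: "{l\<in>{i..<Suc j}. X l = a} = (if X j = a then insert j {l\<in>{i..<j}. X l = a} else {l\<in>{i..<j}. X l = a})"
      using True by (auto simp: less_Suc_eq)
    have c1: "count (mset (map X [i..<Suc j])) a = count (mset (map X [i..<j])) a + (if X j = a then 1 else 0)"
      using True by simp
    have c2: "card {l\<in>{i..<Suc j}. X l = a} = card {l\<in>{i..<j}. X l = a} + (if X j = a then 1 else 0)"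
      by (subst e) auto
    show ?thesis using Suc c1 c2 by simp
  next
    case False
    then have "{l\<in>{i..<Suc j}. X l = a} = {}" by auto
    then show ?thesis using False by simp
  qed
qed

lemma emp_pmf:
  assumes "i \<le> j"
  shows "pmf (emp X i j) a = real (card {l\<in>{i..<Suc j}. X l = a}) / real (Suc j - i)"
proof -
  have ne: "mset (map X [i..<Suc j]) \<noteq> {#}" using assms by simp
  have "pmf (emp X i j) a = count (mset (map X [i..<Suc j])) a / size (mset (map X [i..<Suc j]))"
    unfolding emp_def by (rule pmf_of_multiset[OF ne])
  then show ?thesis by (simp only: count_map_upt size_mset length_map length_upt)
qed

lemma emp_split:
  assumes "s \<le> m" "m < e"
  shows "pmf (emp X s e) a = (real (Suc m - s) / real (Suc e - s)) * pmf (emp X s m) a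
          + (1 - real (Suc m - s) / real (Suc e - s)) * pmf (emp X (Suc m) e) a"
proof -
  have c: "card {l\<in>{s..<Suc e}. X l = a} = card {l\<in>{s..<Suc m}. X l = a} + card {l\<in>{Suc m..<Suc e}. X l = a}"
  proof -
    have "{l\<in>{s..<Suc e}. X l = a} = {l\<in>{s..<Suc m}. X l = a} \<union> {l\<in>{Suc m..<Suc e}. X l = a}"
      using assms by auto
    then show ?thesis by (simp add: card_Un_disjoint disjoint_iff)
  qed
  define N1 where "N1 = real (Suc m - s)"
  define N2 where "N2 = real (Suc e - Suc m)"
  define C1 where "C1 = real (card {l\<in>{s..<Suc m}. X l = a})"
  define C2 where "C2 = real (card {l\<in>{Suc m..<Suc e}. X l = a})"
  have p1: "N1 > 0" "N2 > 0" using assms unfolding N1_def N2_def by auto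
  have d: "real (Suc e - s) = N1 + N2" using assms unfolding N1_def N2_def by simp
  have cc: "real (card {l\<in>{s..<Suc e}. X l = a}) = C1 + C2" unfolding C1_def C2_def c by simp
  have "pmf (emp X s e) a = real (card {l\<in>{s..<Suc e}. X l = a}) / real (Suc e - s)"
    using assms by (intro emp_pmf) simp
  then have e1: "pmf (emp X s e) a = (C1 + C2) / (N1 + N2)" by (simp only: cc d)
  have e2: "pmf (emp X s m) a = C1 / N1"
    using assms by (subst emp_pmf) (auto simp: C1_def N1_def)
  have e3: "pmf (emp X (Suc m) e) a = C2 / N2"
    using assms by (subst emp_pmf) (auto simp: C2_def N2_def)
  have e4: "1 - N1 / (N1 + N2) = N2 / (N1 + N2)" using p1 by (simp add: field_simps)
  have key: "(C1+C2)/(N1+N2) = N1/(N1+N2)*(C1/N1) + N2/(N1+N2)*(C2/N2)"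
    using p1 by (simp add: add_divide_distrib)
  show ?thesis unfolding d[symmetric] N1_def[symmetric] e1 e2 e3 e4 using key
    by (simp only: d N1_def[symmetric] e4)
qed

lemma qc_blocks:
  assumes qc: "quasiconcave_pmf q" and b: "1 \<le> b"
    and good: "\<And>l. l < Suc m \<Longrightarrow> qq \<le> q (emp X (s+l*b) (s+l*b+b-1))"
  shows "qq \<le> q (emp X s (s + Suc m * b - 1))"
  using good
proof (induction m)
  case 0 then show ?case by simp
next
  case (Suc m)
  have h1: "qq \<le> q (emp X s (s + Suc m * b - 1))" using Suc by auto
  have h2: "qq \<le> q (emp X (s + Suc m * b) (s + Suc m * b + b - 1))" using Suc.prems[of "Suc m"] by simp
  let ?th = "real (Suc (s + Suc m * b - 1) - s) / real (Suc (s + Suc (Suc m) * b - 1) - s)"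
  have t1: "Suc (s + Suc m * b - 1) - s = Suc m * b" "Suc (s + Suc (Suc m) * b - 1) - s = Suc (Suc m) * b"
    using b by auto
  have le: "real (Suc m * b) \<le> real (Suc (Suc m) * b)" by (simp only: of_nat_le_iff) simp
  have "0 < Suc (Suc m) * b" using b by simp
  then have pos: "0 < real (Suc (Suc m) * b)" by (simp only: of_nat_0_less_iff)
  have "real (Suc m * b) / real (Suc (Suc m) * b) \<le> 1" using divide_le_eq_1_pos[OF pos] le by blast
  then have th: "0 \<le> ?th" "?th \<le> 1" unfolding t1 by auto
  have sp: "\<forall>a. pmf (emp X s (s + Suc (Suc m) * b - 1)) a =
       ?th * pmf (emp X s (s + Suc m * b - 1)) a + (1 - ?th) * pmf (emp X (s + Suc m * b) (s + Suc (Suc m) * b - 1)) a"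
  proof
    fix a
    have "pmf (emp X s (s + Suc (Suc m) * b - 1)) a =
       ?th * pmf (emp X s (s + Suc m * b - 1)) a + (1 - ?th) * pmf (emp X (Suc (s + Suc m * b - 1)) (s + Suc (Suc m) * b - 1)) a"
      by (rule emp_split) (use b in auto)
    moreover have "Suc (s + Suc m * b - 1) = s + Suc m * b" using b by simp
    ultimately show "pmf (emp X s (s + Suc (Suc m) * b - 1)) a =
       ?th * pmf (emp X s (s + Suc m * b - 1)) a + (1 - ?th) * pmf (emp X (s + Suc m * b) (s + Suc (Suc m) * b - 1)) a"
      by simp
  qed
  have e2: "s + Suc (Suc m) * b - 1 = s + Suc m * b + b - 1" by simp
  have "min (q (emp X s (s + Suc m * b - 1))) (q (emp X (s + Suc m * b) (s + Suc (Suc m) * b - 1)))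
        \<le> q (emp X s (s + Suc (Suc m) * b - 1))"
    using qc th sp unfolding quasiconcave_pmf_def by blast
  then show ?case using h1 h2 e2 by simp
qed

lemma Qv_blocks:
  assumes qc: "quasiconcave_pmf q" and b: "1 \<le> b" and m: "1 \<le> m" and qq: "0 \<le> qq"
    and good: "\<And>l. l < m \<Longrightarrow> qq \<le> q (emp X (s+l*b) (s+l*b+b-1))"
  shows "real (m*b) * qq \<le> Qv q X s (s + m * b - 1)"
proof -
  obtain m' where m': "m = Suc m'" using m by (cases m) auto
  have "qq \<le> q (emp X s (s + m * b - 1))" using qc_blocks[OF qc b, of m' qq X s] good m' by auto
  moreover have "Suc (s + m * b - 1) - s = m * b" using b m by (simp add: m')
  moreover have "Qv q X s (s + m * b - 1) = real (m*b) * q (emp X s (s + m * b - 1))"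
    unfolding Qv_def using \<open>Suc (s + m * b - 1) - s = m * b\<close> by simp
  ultimately show ?thesis by (simp add: mult_left_mono)
qed



lemma det_main:
  assumes qc: "quasiconcave_pmf q" and b: "1 \<le> b" and M: "1 \<le> M" and qq: "0 \<le> qq"
    and cS: "0 < cS" and cover: "cS \<le> real (M*b) * qq"
    and cDz: "\<And>n. 1 \<le> n \<Longrightarrow> n \<le> M*b + b \<Longrightarrow> cD n \<le> 0"
    and a: "1 \<le> a"
    and good: "\<And>l. l < 2*M \<Longrightarrow> qq \<le> q (emp X (a+l*b) (a+l*b+b-1))"
  shows "\<exists>k. Suc k \<le> a + 2*M*b \<and> ipt_stop q f0 cS cD X k"
proof -
  let ?tau = "ipt_tau q f0 cS cD X"
  define e where "e = a + M*b - 1"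
  have Mb: "1 \<le> M*b" using b M by simp
  have Q1: "real (M*b) * qq \<le> Qv q X a (a + M*b - 1)"
    by (rule Qv_blocks[OF qc b M qq]) (use good in auto)
  obtain r1 where r1: "a \<le> r1" "r1 \<le> e" "cS \<le> ipt_S q X (?tau r1) r1" "?tau r1 = ?tau a"
  proof -
    have h1: "a \<le> e" using Mb unfolding e_def by arith
    then have h1': "a \<le> Suc e" by simp
    have h2: "cS \<le> Qv q X a e" using Q1 cover unfolding e_def by linarith
    show ?thesis using crossing[OF a tau_le[OF a] h1 h1' h2] that by blast
  qed
  have r1g: "1 \<le> r1" using r1 a by simp
  show ?thesis
  proof (cases "ipt_stop q f0 cS cD X r1")
    case True
    have "Suc r1 \<le> a + 2*M*b" using r1(2) Mb unfolding e_def by arith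
    then show ?thesis using True by blast
  next
    case False
    have tr: "?tau (Suc r1) = Suc r1" using tau_restart[OF r1g r1(3) False] .
    define P where "P l \<longleftrightarrow> Suc r1 \<le> a + l*b" for l
    have PM: "P M" unfolding P_def using r1(2) Mb unfolding e_def by arith
    define l0 where "l0 = (LEAST l. P l)"
    have Pl0: "P l0" unfolding l0_def using PM by (rule LeastI)
    have l0M: "l0 \<le> M" unfolding l0_def using PM by (rule Least_le)
    have l0pos: "l0 \<noteq> 0"
    proof
      assume "l0 = 0"
      then have "Suc r1 \<le> a" using Pl0 unfolding P_def by simp
      with r1(1) show False by simp
    qed
    then obtain l' where l': "l0 = Suc l'" by (cases l0) auto
    have "\<not> P l'" using not_less_Least[of l' P] l' unfolding l0_def by simp
    then have up: "a + l0*b \<le> r1 + b" unfolding P_def l' by simp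
    define s where "s = a + l0*b"
    define e2 where "e2 = s + M*b - 1"
    have Q2: "real (M*b) * qq \<le> Qv q X s (s + M*b - 1)"
    proof (rule Qv_blocks[OF qc b M qq])
      fix l assume "l < M"
      then have "l0 + l < 2*M" using l0M by simp
      from good[OF this] show "qq \<le> q (emp X (s + l*b) (s + l*b + b - 1))"
        unfolding s_def by (simp add: add_mult_distrib add.assoc)
    qed
    have sr: "Suc r1 \<le> s" using Pl0 unfolding P_def s_def .
    obtain r2 where r2: "Suc r1 \<le> r2" "r2 \<le> e2" "cS \<le> ipt_S q X (?tau r2) r2" "?tau r2 = ?tau (Suc r1)"
    proof -
      have h0: "1 \<le> Suc r1" by simp
      have h3: "?tau (Suc r1) \<le> s" using tr sr by simp
      have h1: "Suc r1 \<le> e2" using Mb sr unfolding e2_def by arith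
      have h1': "s \<le> Suc e2" using Mb sr unfolding e2_def by arith
      have h2: "cS \<le> Qv q X s e2" using Q2 cover unfolding e2_def by linarith
      show ?thesis using crossing[OF h0 h3 h1 h1' h2] that by blast
    qed
    have "ipt_stop q f0 cS cD X r2"
    proof (rule stop_small[OF _ cS r2(3) cDz])
      show "1 \<le> r2" using r2 by simp
      have "r2 \<le> s + M*b - 1" using r2(2) unfolding e2_def .
      then show "Suc r2 - ?tau r2 \<le> M * b + b" using r2(4) tr up unfolding s_def by arith
    qed
    moreover have "Suc r2 \<le> a + 2*M*b"
    proof -
      have "l0 * b \<le> M * b" using l0M by simp
      moreover have "2*M*b = M*b + M*b" by simp
      ultimately show ?thesis using r2(2) Mb unfolding e2_def s_def by arith
    qed
    ultimately show ?thesis by blast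
  qed
qed



definition muP :: "'a pmf \<Rightarrow> (nat \<Rightarrow> 'a) measure" where
  "muP f = PiM UNIV (\<lambda>_. measure_pmf f)"

lemma muP_prob: "prob_space (muP f)"
  unfolding muP_def by (intro prob_space_PiM prob_space_measure_pmf)

lemma space_muP[simp]: "space (muP f) = UNIV"
  unfolding muP_def by (simp add: space_PiM)

lemma coord_indep: "prob_space.indep_vars (muP f) (\<lambda>_. measure_pmf f) (\<lambda>i Y. Y i) UNIV"
proof -
  interpret prob_space "muP f" by (rule muP_prob)
  have d: "distr (PiM UNIV (\<lambda>_. measure_pmf f)) (measure_pmf f) (\<lambda>Y. Y i) = measure_pmf f" for i
    by (rule distr_PiM_component) (auto intro: prob_space_measure_pmf)
  show ?thesis
  proof (subst indep_vars_iff_distr_eq_PiM)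
    show "random_variable (measure_pmf f) (\<lambda>Y. Y i)" for i
      unfolding muP_def by (rule measurable_component_singleton) simp
    have "(\<lambda>x. \<lambda>i\<in>UNIV. x i) = (\<lambda>x::nat\<Rightarrow>'a. x)" by (simp add: restrict_def)
    then show "distr (muP f) (Pi\<^sub>M UNIV (\<lambda>_. measure_pmf f)) (\<lambda>x. \<lambda>i\<in>UNIV. x i) =
       Pi\<^sub>M UNIV (\<lambda>i. distr (muP f) (measure_pmf f) (\<lambda>Y. Y i))"
      by (simp add: d muP_def)
  qed simp
qed

lemma finite_PiM_sets:
  fixes f :: "'a::finite pmf"
  assumes K: "finite K" and B: "B \<subseteq> space (PiM K (\<lambda>_. measure_pmf f))"
  shows "B \<in> sets (PiM K (\<lambda>_. measure_pmf f))"
proof -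
  have sp: "space (PiM K (\<lambda>_. measure_pmf f)) = PiE K (\<lambda>_. UNIV)" by (simp add: space_PiM)
  have finB: "finite B" using finite_subset[OF B[unfolded sp]] finite_PiE[OF K, of "\<lambda>_. UNIV"] finite by blast
  have "B = (\<Union>h\<in>B. PiE K (\<lambda>i. {h i}))"
  proof -
    have "PiE K (\<lambda>i. {h i}) = {h}" if "h \<in> B" for h
      using that B unfolding sp by (intro PiE_singleton) (auto simp: PiE_def)
    then show ?thesis by auto
  qed
  also have "\<dots> \<in> sets (PiM K (\<lambda>_. measure_pmf f))"
    using finB by (intro sets.finite_UN sets_PiM_I_finite K) auto
  finally show ?thesis .
qed

lemma finite_dep_sets:
  fixes f :: "'a::finite pmf"
  assumes K: "finite K" and dep: "\<And>Y Y'. (\<forall>i\<in>K. Y i = Y' i) \<Longrightarrow> Y \<in> A \<Longrightarrow> Y' \<in> A"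
  shows "A \<in> sets (muP f)"
proof -
  let ?B = "(\<lambda>Y. restrict Y K) ` A"
  have meas: "(\<lambda>Y. restrict Y K) \<in> measurable (muP f) (PiM K (\<lambda>_. measure_pmf f))"
    unfolding muP_def by (rule measurable_restrict_subset) simp
  have Bs: "?B \<in> sets (PiM K (\<lambda>_. measure_pmf f))"
    by (rule finite_PiM_sets[OF K]) (auto simp: space_PiM)
  have "A = (\<lambda>Y. restrict Y K) -` ?B \<inter> space (muP f)"
  proof (auto)
    fix Y Y' assume "Y' \<in> A" "restrict Y K = restrict Y' K"
    then have "\<forall>i\<in>K. Y' i = Y i" by (metis restrict_apply')
    then show "Y \<in> A" using dep \<open>Y' \<in> A\<close> by blast
  qed
  also have "\<dots> \<in> sets (muP f)" using measurable_sets[OF meas Bs] .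
  finally show ?thesis .
qed

lemma emp_cong: "(\<And>l. i \<le> l \<Longrightarrow> l \<le> j \<Longrightarrow> X l = X' l) \<Longrightarrow> emp X i j = emp X' i j"
  unfolding emp_def by (intro arg_cong[where f=pmf_of_multiset] arg_cong[where f=mset] map_cong) auto



lemma sum_ind_card: "finite I \<Longrightarrow> (\<Sum>i\<in>I. indicator {c} (Y i) :: real) = real (card {i\<in>I. Y i = c})"
proof -
  assume fI: "finite I"
  have "(\<Sum>i\<in>I. indicator {c} (Y i) :: real) = (\<Sum>i\<in>I. if Y i = c then 1 else 0)"
    by (intro sum.cong) (auto simp: indicator_def)
  also have "\<dots> = real (card {i\<in>I. Y i = c})"
    using fI by (simp add: sum.inter_filter[symmetric])
  finally show ?thesis .
qed

lemma block_hoeff: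
  fixes f :: "'a::finite pmf" and c :: 'a
  assumes b: "1 \<le> b" and eta: "0 \<le> \<eta>"
  shows "measure (muP f) {Y. \<eta> \<le> \<bar>pmf (emp Y s (s+b-1)) c - pmf f c\<bar>} \<le> 2 * exp (-2 * real b * \<eta>\<^sup>2)"
proof -
  interpret prob_space "muP f" by (rule muP_prob)
  define I where "I = {s..<s+b}"
  define Xs :: "nat \<Rightarrow> (nat \<Rightarrow> 'a) \<Rightarrow> real" where "Xs i Y = (indicator {c} (Y i) :: real)" for i Y
  have compmeas: "(indicator {c} :: 'a \<Rightarrow> real) \<in> borel_measurable (measure_pmf f)" by simp
  have cm: "(\<lambda>Y. Y i) \<in> measurable (muP f) (measure_pmf f)" for i
    unfolding muP_def by (rule measurable_component_singleton) simp
  have dc: "distr (muP f) (measure_pmf f) (\<lambda>Y. Y i) = measure_pmf f" for i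
    unfolding muP_def by (rule distr_PiM_component) (auto intro: prob_space_measure_pmf)
  have dX: "distr (muP f) borel (Xs i) = distr (measure_pmf f) borel (indicator {c} :: 'a \<Rightarrow> real)" for i
  proof -
    have "distr (distr (muP f) (measure_pmf f) (\<lambda>Y. Y i)) borel (indicator {c} :: 'a \<Rightarrow> real) = distr (muP f) borel ((indicator {c} :: 'a \<Rightarrow> real) \<circ> (\<lambda>Y. Y i))"
      by (rule distr_distr[OF compmeas cm])
    then show ?thesis unfolding dc Xs_def by (simp add: comp_def)
  qed
  have indep: "indep_vars (\<lambda>_. borel) Xs I"
  proof -
    have "indep_vars (\<lambda>_. borel) (\<lambda>i Y. indicator {c} (Y i) :: real) UNIV"
      by (rule indep_vars_compose2[OF coord_indep]) simp
    then show ?thesis unfolding Xs_def by (rule indep_vars_subset) simp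
  qed
  interpret HI: iid_interval_bounded_random_variables "muP f" I Xs "Xs s" 0 1
  proof
    show "finite I" unfolding I_def by simp
    show "indep_vars (\<lambda>_. borel) Xs I" by (rule indep)
    show "distr (muP f) borel (Xs i) = distr (muP f) borel (Xs s)" if "i \<in> I" for i
      by (simp only: dX)
    show "random_variable borel (Xs s)" unfolding Xs_def by (rule measurable_compose[OF cm compmeas])
    show "AE x in muP f. Xs s x \<in> {0..1}" unfolding Xs_def by (simp add: indicator_def)
  qed
  interpret H: Hoeffding_ineq_iid "muP f" I Xs "Xs s" 0 1 "expectation (Xs s)"
    by unfold_locales (rule reflexive)
  have expX: "expectation (Xs s) = pmf f c"
  proof -
    have "expectation (Xs s) = integral\<^sup>L (distr (muP f) (measure_pmf f) (\<lambda>Y. Y s)) (indicator {c} :: 'a \<Rightarrow> real)"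
      unfolding Xs_def by (rule integral_distr[symmetric, OF cm compmeas])
    also have "\<dots> = pmf f c" unfolding dc by (simp add: measure_pmf_single)
    finally show ?thesis .
  qed
  have cardI: "card I = b" unfolding I_def by simp
  have eq: "{Y. \<eta> \<le> \<bar>pmf (emp Y s (s+b-1)) c - pmf f c\<bar>} =
      {x \<in> space (muP f). \<eta> \<le> \<bar>(\<Sum>i\<in>I. Xs i x) / real (card I) - expectation (Xs s)\<bar>}"
  proof -
    have "pmf (emp Y s (s+b-1)) c = (\<Sum>i\<in>I. Xs i Y) / real (card I)" for Y
    proof -
      have "pmf (emp Y s (s+b-1)) c = real (card {l\<in>{s..<Suc (s+b-1)}. Y l = c}) / real (Suc (s+b-1) - s)"
        using b by (intro emp_pmf) simp
      moreover have "Suc (s+b-1) = s + b" using b by simp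
      ultimately show ?thesis unfolding Xs_def sum_ind_card[OF finite_atLeastLessThan] cardI I_def by simp
    qed
    then show ?thesis using expX by simp
  qed
  have "0 < b" using b by simp
  have "measure (muP f) {x \<in> space (muP f). \<eta> \<le> \<bar>(\<Sum>i\<in>I. Xs i x) / real (card I) - expectation (Xs s)\<bar>}
      \<le> 2 * exp (-2 * real (card I) * \<eta>\<^sup>2 / (1 - 0)\<^sup>2)"
    using H.Hoeffding_ineq_abs_ge'[OF eta] \<open>0 < b\<close> unfolding I_def by simp
  then show ?thesis unfolding eq cardI by simp
qed



definition goodep :: "('a pmf \<Rightarrow> real) \<Rightarrow> real \<Rightarrow> nat \<Rightarrow> nat \<Rightarrow> nat \<Rightarrow> (nat \<Rightarrow> 'a) \<Rightarrow> bool" where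
  "goodep q qq M b a Y \<longleftrightarrow> (\<forall>l<2*M. qq \<le> q (emp Y (a+l*b) (a+l*b+b-1)))"

lemma block_in:
  fixes a b l i M :: nat
  assumes b: "1 \<le> b" and l: "l < 2*M" and i: "a + l*b \<le> i" "i \<le> a+l*b+b-1"
  shows "a \<le> i \<and> i < a + 2*M*b"
proof -
  have "Suc l \<le> 2*M" using l by simp
  then have "Suc l * b \<le> 2*M*b" by (rule mult_le_mono1)
  then show ?thesis using i b by simp
qed

lemma goodep_cong:
  assumes b: "1 \<le> b" and ag: "\<forall>i\<in>{a..<a+2*M*b}. Y i = Y' i"
  shows "goodep q qq M b a Y = goodep q qq M b a Y'"
proof -
  have "emp Y (a+l*b) (a+l*b+b-1) = emp Y' (a+l*b) (a+l*b+b-1)" if "l < 2*M" for l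
    using block_in[OF b that] ag by (intro emp_cong) auto
  then show ?thesis unfolding goodep_def by auto
qed

lemma goodep_sets:
  fixes f :: "'a::finite pmf"
  assumes b: "1 \<le> b"
  shows "{Y. \<not> goodep q qq M b a Y} \<in> sets (muP f)"
proof (rule finite_dep_sets[of "{a..<a+2*M*b}"])
  fix Y Y' :: "nat \<Rightarrow> 'a"
  assume "\<forall>i\<in>{a..<a+2*M*b}. Y i = Y' i" "Y \<in> {Y. \<not> goodep q qq M b a Y}"
  then show "Y' \<in> {Y. \<not> goodep q qq M b a Y}" using goodep_cong[OF b, of a M Y Y' q qq] by simp
qed simp

lemma bad_ep_prob:
  fixes f :: "'a::finite pmf"
  assumes b: "1 \<le> b" and eta: "0 < \<eta>"
    and close: "\<And>g. (\<forall>c. \<bar>pmf g c - pmf f c\<bar> < \<eta>) \<Longrightarrow> qq \<le> q g"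
  shows "measure (muP f) {Y. \<not> goodep q qq M b a Y}
         \<le> real (2*M) * real CARD('a) * (2 * exp (-2 * real b * \<eta>\<^sup>2))"
proof -
  interpret prob_space "muP f" by (rule muP_prob)
  define H where "H = (\<lambda>(l, c). {Y. \<eta> \<le> \<bar>pmf (emp Y (a+l*b) (a+l*b+b-1)) c - pmf f c\<bar>})"
  have Hs: "H lc \<in> sets (muP f)" for lc
  proof (cases lc)
    case (Pair l c)
    have e: "emp Y (a+l*b) (a+l*b+b-1) = emp Y' (a+l*b) (a+l*b+b-1)"
      if "\<forall>i\<in>{a+l*b..<a+l*b+b}. Y i = Y' i" for Y Y' :: "nat \<Rightarrow> 'a"
      using that b by (intro emp_cong) auto
    show ?thesis unfolding Pair
    proof (rule finite_dep_sets[of "{a+l*b..<a+l*b+b}"])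
      fix Y Y' :: "nat \<Rightarrow> 'a"
      assume ag: "\<forall>i\<in>{a+l*b..<a+l*b+b}. Y i = Y' i" and "Y \<in> H (l, c)"
      then show "Y' \<in> H (l, c)" using e[OF ag] unfolding H_def by simp
    qed simp
  qed
  have sub: "{Y. \<not> goodep q qq M b a Y} \<subseteq> (\<Union>lc\<in>{..<2*M} \<times> UNIV. H lc)"
  proof
    fix Y assume "Y \<in> {Y. \<not> goodep q qq M b a Y}"
    then obtain l where l: "l < 2*M" "\<not> qq \<le> q (emp Y (a+l*b) (a+l*b+b-1))"
      unfolding goodep_def by auto
    then obtain c where "\<not> \<bar>pmf (emp Y (a+l*b) (a+l*b+b-1)) c - pmf f c\<bar> < \<eta>"
      using close by blast
    then have "Y \<in> H (l, c)" unfolding H_def by simp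
    then show "Y \<in> (\<Union>lc\<in>{..<2*M} \<times> UNIV. H lc)" using l by auto
  qed
  have "measure (muP f) {Y. \<not> goodep q qq M b a Y} \<le> measure (muP f) (\<Union>lc\<in>{..<2*M} \<times> UNIV. H lc)"
    by (rule finite_measure_mono[OF sub]) (use Hs in auto)
  also have "\<dots> \<le> (\<Sum>lc\<in>{..<2*M} \<times> UNIV. measure (muP f) (H lc))"
    by (rule finite_measure_subadditive_finite) (use Hs in auto)
  also have "\<dots> \<le> (\<Sum>lc\<in>{..<2*M} \<times> (UNIV::'a set). 2 * exp (-2 * real b * \<eta>\<^sup>2))"
  proof (rule sum_mono)
    fix lc :: "nat \<times> 'a"
    obtain l c where lc: "lc = (l, c)" by (cases lc)
    show "measure (muP f) (H lc) \<le> 2 * exp (-2 * real b * \<eta>\<^sup>2)"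
      using block_hoeff[OF b, of \<eta> f "a+l*b" c] eta unfolding lc H_def by simp
  qed
  also have "\<dots> = real (2*M) * real CARD('a) * (2 * exp (-2 * real b * \<eta>\<^sup>2))"
    by (simp add: card_cartesian_product)
  finally show ?thesis .
qed



lemma indep_epochs:
  fixes f :: "'a::finite pmf"
  assumes b: "1 \<le> b" and n: "1 \<le> n"
  shows "measure (muP f) {Y. \<forall>j<n. \<not> goodep q qq M b (t1 + j*(2*M*b)) Y}
       = (\<Prod>j<n. measure (muP f) {Y. \<not> goodep q qq M b (t1 + j*(2*M*b)) Y})"
proof -
  interpret prob_space "muP f" by (rule muP_prob)
  define E where "E = 2*M*b"
  define K where "K j = {t1 + j*E ..< t1 + j*E + E}" for j
  have disj: "disjoint_family_on K UNIV"
    unfolding disjoint_family_on_def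
  proof (intro ballI impI)
    fix m n :: nat assume "m \<noteq> n"
    show "K m \<inter> K n = {}"
    proof (cases "m < n")
      case True
      then have "Suc m * E \<le> n * E" by (intro mult_le_mono1) simp
      then show ?thesis unfolding K_def by auto
    next
      case False
      then have "n < m" using \<open>m \<noteq> n\<close> by simp
      then have "Suc n * E \<le> m * E" by (intro mult_le_mono1) simp
      then show ?thesis unfolding K_def by auto
    qed
  qed
  have ind: "indep_vars (\<lambda>j. PiM (K j) (\<lambda>_. measure_pmf f)) (\<lambda>j Y. restrict (\<lambda>i. Y i) (K j)) UNIV"
    by (rule indep_vars_restrict[OF coord_indep]) (use disj in auto)
  define B where "B j = {h \<in> space (PiM (K j) (\<lambda>_. measure_pmf f)). \<not> goodep q qq M b (t1 + j*E) h}" for j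
  have Bs: "B j \<in> sets (PiM (K j) (\<lambda>_. measure_pmf f))" for j
    unfolding B_def by (rule finite_PiM_sets) (auto simp: K_def)
  have pre: "(\<lambda>Y. restrict (\<lambda>i. Y i) (K j)) -` B j \<inter> space (muP f) = {Y. \<not> goodep q qq M b (t1 + j*E) Y}" for j
  proof -
    have "goodep q qq M b (t1 + j*E) (restrict Y (K j)) = goodep q qq M b (t1 + j*E) Y" for Y :: "nat \<Rightarrow> 'a"
      by (rule goodep_cong[OF b]) (auto simp: K_def E_def)
    then show ?thesis unfolding B_def by (auto simp: space_PiM K_def)
  qed
  have "prob (\<Inter>j\<in>{..<n}. (\<lambda>Y. restrict (\<lambda>i. Y i) (K j)) -` B j \<inter> space (muP f))
      = (\<Prod>j\<in>{..<n}. prob ((\<lambda>Y. restrict (\<lambda>i. Y i) (K j)) -` B j \<inter> space (muP f)))"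
  proof (rule indep_varsD[OF ind])
    have "0 \<in> {..<n}" using n by simp
    then show "{..<n} \<noteq> {}" by blast
  qed (use Bs in auto)
  moreover have "(\<Inter>j\<in>{..<n}. {Y. \<not> goodep q qq M b (t1 + j*E) Y}) = {Y. \<forall>j<n. \<not> goodep q qq M b (t1 + j*E) Y}"
    using n by auto
  ultimately show ?thesis unfolding pre E_def by simp
qed



lemma main_bound:
  fixes f :: "'a::finite pmf" and x :: "nat \<Rightarrow> 'a" and cD :: "nat \<Rightarrow> real"
  assumes qc: "quasiconcave_pmf q" and b: "1 \<le> b" and M: "1 \<le> M" and qq: "0 \<le> qq"
    and cS: "0 < cS" and cover: "cS \<le> real (M*b) * qq"
    and cDz: "\<And>n. 1 \<le> n \<Longrightarrow> n \<le> M*b + b \<Longrightarrow> cD n \<le> 0"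
    and t1: "1 \<le> t1" and eta: "0 < \<eta>"
    and close: "\<And>g. (\<forall>c. \<bar>pmf g c - pmf f c\<bar> < \<eta>) \<Longrightarrow> qq \<le> q g"
    and p_def: "p = real (2*M) * real CARD('a) * (2 * exp (-2 * real b * \<eta>\<^sup>2))"
    and p1: "p < 1"
  shows "(\<integral>\<^sup>+Y. delay (tI q f0 cS cD (\<lambda>l. if l < t1 then x l else Y l)) t1 \<partial>muP f)
         \<le> ennreal (real (2*M*b) / (1 - p))"
proof -
  interpret prob_space "muP f" by (rule muP_prob)
  define E where "E = 2*M*b"
  have E1: "1 \<le> E" unfolding E_def using b M by simp
  have p0: "0 \<le> p" unfolding p_def by simp
  define A where "A n = {Y. \<forall>j<n. \<not> goodep q qq M b (t1 + j*E) Y}" for n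
  have As[measurable]: "A n \<in> sets (muP f)" for n
  proof (rule finite_dep_sets[of "{..<t1 + n*E}"])
    fix Y Y' :: "nat \<Rightarrow> 'a"
    assume ag: "\<forall>i\<in>{..<t1 + n*E}. Y i = Y' i" and YA: "Y \<in> A n"
    have "goodep q qq M b (t1 + j*E) Y = goodep q qq M b (t1 + j*E) Y'" if "j < n" for j
    proof (rule goodep_cong[OF b])
      have "Suc j * E \<le> n * E" using that by (intro mult_le_mono1) simp
      then show "\<forall>i\<in>{t1 + j * E..<t1 + j * E + 2 * M * b}. Y i = Y' i"
        using ag unfolding E_def by auto
    qed
    then show "Y' \<in> A n" using YA unfolding A_def by auto
  qed simp
  have pA: "emeasure (muP f) (A n) \<le> ennreal (p^n)" for n
  proof (cases "n = 0")
    case True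
    then have "A n = space (muP f)" unfolding A_def by simp
    then have "emeasure (muP f) (A n) = 1" by (metis emeasure_space_1)
    then show ?thesis using True by simp
  next
    case False
    then have n1: "1 \<le> n" by simp
    have "measure (muP f) (A n) = (\<Prod>j<n. measure (muP f) {Y. \<not> goodep q qq M b (t1 + j*E) Y})"
      unfolding A_def E_def by (rule indep_epochs[OF b n1])
    also have "\<dots> \<le> (\<Prod>j<n. p)"
    proof (rule prod_mono)
      fix j assume "j \<in> {..<n}"
      show "0 \<le> measure (muP f) {Y. \<not> goodep q qq M b (t1 + j*E) Y} \<and>
            measure (muP f) {Y. \<not> goodep q qq M b (t1 + j*E) Y} \<le> p"
        using bad_ep_prob[OF b eta close, where M=M and a="t1 + j*E"] unfolding p_def by simp
    qed
    finally have "measure (muP f) (A n) \<le> p^n" by simp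
    then show ?thesis by (simp add: emeasure_eq_measure ennreal_leI)
  qed
  have point: "delay (tI q f0 cS cD (\<lambda>l. if l < t1 then x l else Y l)) t1
               \<le> (\<Sum>n. of_nat E * indicator (A n) Y)" for Y
  proof (cases "\<exists>j. goodep q qq M b (t1 + j*E) Y")
    case True
    define J where "J = (LEAST j. goodep q qq M b (t1 + j*E) Y)"
    have gJ: "goodep q qq M b (t1 + J*E) Y" unfolding J_def using True by (metis LeastI)
    have inA: "Y \<in> A n" if "n \<le> J" for n
      unfolding A_def using not_less_Least[where P="\<lambda>j. goodep q qq M b (t1 + j*E) Y"] that
      unfolding J_def by fastforce
    define X where "X = (\<lambda>l. if l < t1 then x l else Y l)"
    define a where "a = t1 + J*E"
    have a1: "1 \<le> a" using t1 unfolding a_def by simp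
    have good: "qq \<le> q (emp X (a+l*b) (a+l*b+b-1))" if "l < 2*M" for l
    proof -
      have "emp X (a+l*b) (a+l*b+b-1) = emp Y (a+l*b) (a+l*b+b-1)"
        unfolding X_def a_def by (intro emp_cong) auto
      then show ?thesis using gJ that unfolding goodep_def a_def by simp
    qed
    obtain k where k: "Suc k \<le> a + 2*M*b" "ipt_stop q f0 cS cD X k"
      using det_main[where cD=cD and X=X and a=a and q=q, OF qc b M qq cS cover cDz a1 good] by blast
    have ex: "\<exists>k. ipt_stop q f0 cS cD X k" using k by blast
    define m where "m = (LEAST k. ipt_stop q f0 cS cD X k)"
    have mk: "m \<le> k" unfolding m_def using k(2) by (rule Least_le)
    have "delay (tI q f0 cS cD X) t1 = of_nat (Suc m - t1)"
      unfolding tI_def delay_def m_def using ex by simp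
    also have "\<dots> \<le> of_nat (Suc J * E)"
    proof -
      have "Suc m - t1 \<le> Suc J * E" using mk k(1) unfolding a_def E_def by simp
      then show ?thesis by (rule of_nat_mono)
    qed
    also have "\<dots> = (\<Sum>n<Suc J. of_nat E * indicator (A n) Y)"
      using inA by (simp add: indicator_def distrib_right)
    also have "\<dots> \<le> (\<Sum>n. of_nat E * indicator (A n) Y)"
      by (rule sum_le_suminf) (auto intro: summableI)
    finally show ?thesis unfolding X_def .
  next
    case False
    then have inA: "Y \<in> A n" for n unfolding A_def by auto
    have "(\<Sum>n. of_nat E * indicator (A n) Y :: ennreal) = top"
    proof (rule ccontr)
      assume "\<not> ?thesis"
      then have "(\<Sum>n. of_nat E * indicator (A n) Y :: ennreal) < top" using top.not_eq_extremum by blast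
      then obtain N where N: "(\<Sum>n. of_nat E * indicator (A n) Y :: ennreal) < of_nat N"
        using ennreal_Ex_less_of_nat by blast
      have "N \<le> N * E" using E1 by simp
      then have "(of_nat N :: ennreal) \<le> of_nat (N * E)" by (rule of_nat_mono)
      also have "\<dots> = (\<Sum>n<N. of_nat E * indicator (A n) Y)" using inA by (simp add: indicator_def mult.commute)
      also have "\<dots> \<le> (\<Sum>n. of_nat E * indicator (A n) Y)"
        by (rule sum_le_suminf) (auto intro: summableI)
      finally show False using N by simp
    qed
    then show ?thesis by simp
  qed
  have "(\<integral>\<^sup>+Y. delay (tI q f0 cS cD (\<lambda>l. if l < t1 then x l else Y l)) t1 \<partial>muP f)
        \<le> (\<integral>\<^sup>+Y. (\<Sum>n. of_nat E * indicator (A n) Y) \<partial>muP f)"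
    by (rule nn_integral_mono) (rule point)
  also have "\<dots> = (\<Sum>n. \<integral>\<^sup>+Y. of_nat E * indicator (A n) Y \<partial>muP f)"
    by (rule nn_integral_suminf) measurable
  also have "\<dots> = (\<Sum>n. of_nat E * emeasure (muP f) (A n))"
    by (simp add: nn_integral_cmult_indicator)
  also have "\<dots> \<le> (\<Sum>n. ennreal (real E * p^n))"
  proof (rule suminf_le)
    fix n
    have "of_nat E * emeasure (muP f) (A n) \<le> of_nat E * ennreal (p^n)"
      by (rule mult_left_mono[OF pA]) simp
    also have "\<dots> = ennreal (real E * p^n)"
      using p0 by (simp add: ennreal_mult ennreal_of_nat_eq_real_of_nat)
    finally show "of_nat E * emeasure (muP f) (A n) \<le> ennreal (real E * p^n)" .
  qed (auto intro: summableI)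
  also have "\<dots> = ennreal (\<Sum>n. real E * p^n)"
    using p0 p1 by (intro suminf_ennreal2) (auto intro: summable_mult summable_geometric)
  also have "(\<Sum>n. real E * p^n) = real E / (1 - p)"
    using p0 p1 by (simp add: suminf_mult summable_geometric suminf_geometric)
  finally show ?thesis unfolding E_def .
qed



lemma params:
  fixes qlow \<delta> cS :: real
  assumes ql: "0 < qlow" and d0: "0 < \<delta>" and cS: "0 < cS" and y2: "2 \<le> \<delta>*cS/qlow"
  defines "qq \<equiv> qlow/(1+\<delta>)"
  defines "b \<equiv> nat \<lfloor>\<delta>*cS/qlow\<rfloor>"
  defines "M \<equiv> nat \<lceil>cS/(real b*qq)\<rceil>"
  shows "1 \<le> b" "1 \<le> M" "cS \<le> real (M*b) * qq" "real (M*b + b) \<le> (1+3*\<delta>)*cS/qlow"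
        "real (2*M*b) \<le> 2*(1+2*\<delta>)*cS/qlow" "real M \<le> 2*(1+\<delta>)/\<delta> + 1"
        "\<delta>*cS/(2*qlow) \<le> real b"
proof -
  define y where "y = \<delta>*cS/qlow"
  have qqp: "0 < qq" unfolding qq_def using ql d0 by simp
  have fy: "2 \<le> \<lfloor>y\<rfloor>" using y2 unfolding y_def by linarith
  have rb: "real b = of_int \<lfloor>y\<rfloor>" unfolding b_def y_def using fy y_def by simp
  have b1: "real b \<le> y" "y - 1 < real b" using rb by linarith+
  show "1 \<le> b" using fy unfolding b_def y_def by linarith
  have bp: "0 < real b" using fy rb by linarith
  show bhalf: "\<delta>*cS/(2*qlow) \<le> real b" using b1 y2 unfolding y_def by (simp add: field_simps)
  define z where "z = cS/(real b*qq)"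
  have zp: "0 < z" unfolding z_def using cS bp qqp by simp
  have rM: "real M = of_int \<lceil>z\<rceil>" unfolding M_def z_def using zp z_def by simp
  have M1: "z \<le> real M" "real M < z + 1" using rM by linarith+
  show "1 \<le> M" using M1 zp by linarith
  have "cS = z * (real b * qq)" unfolding z_def using bp qqp by simp
  also have "\<dots> \<le> real M * (real b * qq)" using M1 bp qqp by (intro mult_right_mono) auto
  finally show "cS \<le> real (M*b) * qq" by (simp add: mult.assoc)
  have Mb: "real M * real b \<le> cS/qq + real b"
  proof -
    have "real M * real b \<le> (z+1) * real b" using M1 bp by (intro mult_right_mono) auto
    also have "\<dots> = cS/qq + real b" unfolding z_def using bp qqp by (simp add: field_simps)
    finally show ?thesis .
  qed
  have cq: "cS/qq = (1+\<delta>)*cS/qlow" unfolding qq_def using ql d0 by (simp add: field_simps)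
  have b_le: "real b \<le> \<delta>*cS/qlow" using b1(1) unfolding y_def .
  show "real (M*b + b) \<le> (1+3*\<delta>)*cS/qlow"
  proof -
    have "real (M*b + b) = real M * real b + real b" by simp
    also have "\<dots> \<le> (1+\<delta>)*cS/qlow + 2*(\<delta>*cS/qlow)" using Mb cq b_le by linarith
    also have "\<dots> = (1+3*\<delta>)*cS/qlow" using ql by (simp add: field_simps)
    finally show ?thesis .
  qed
  show "real (2*M*b) \<le> 2*(1+2*\<delta>)*cS/qlow"
  proof -
    have "real (2*M*b) = 2*(real M * real b)" by simp
    also have "\<dots> \<le> 2*((1+\<delta>)*cS/qlow + \<delta>*cS/qlow)"
    proof -
      have "real M * real b \<le> (1+\<delta>)*cS/qlow + \<delta>*cS/qlow" using Mb cq b_le by linarith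
      then show ?thesis by simp
    qed
    also have "\<dots> = 2*(1+2*\<delta>)*cS/qlow" using ql by (simp add: field_simps)
    finally show ?thesis .
  qed
  show "real M \<le> 2*(1+\<delta>)/\<delta> + 1"
  proof -
    have "z \<le> cS / ((\<delta>*cS/(2*qlow)) * qq)" unfolding z_def
      using bhalf qqp cS d0 ql bp by (intro divide_left_mono mult_right_mono mult_pos_pos) auto
    also have "\<dots> = 2*(1+\<delta>)/\<delta>" unfolding qq_def using cS d0 ql by (simp add: field_simps)
    finally show ?thesis using M1 by linarith
  qed
qed



lemma ratio_bound:
  fixes qlow \<delta> e cS X p :: real
  assumes ql: "0 < qlow" and d0: "0 < \<delta>" and dh: "\<delta> \<le> 1/2" and de: "\<delta> \<le> e*qlow/12"
    and cS: "0 < cS" and X0: "0 \<le> X" and Xb: "X \<le> 2*(1+2*\<delta>)*cS/qlow" and p0: "0 \<le> p" and pd: "p \<le> \<delta>"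
  shows "X / (1 - p) \<le> (2/qlow + e) * cS"
proof -
  have "X / (1 - p) \<le> X / (1 - \<delta>)" using X0 pd dh by (intro divide_left_mono) auto
  also have "\<dots> \<le> (2*(1+2*\<delta>)*cS/qlow) / (1 - \<delta>)" using Xb dh by (intro divide_right_mono) auto
  also have "\<dots> \<le> 2*(1+6*\<delta>)*cS/qlow"
  proof -
    have "1+2*\<delta> \<le> (1+6*\<delta>)*(1-\<delta>)" using d0 dh by (simp add: algebra_simps)
    moreover have "0 \<le> 2*cS/qlow" using cS ql by simp
    ultimately have "(1+2*\<delta>)*(2*cS/qlow) \<le> ((1+6*\<delta>)*(1-\<delta>))*(2*cS/qlow)"
      by (rule mult_right_mono)
    moreover have "2*(1+2*\<delta>)*cS/qlow = (1+2*\<delta>)*(2*cS/qlow)" by simp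
    moreover have "2*(1+6*\<delta>)*cS/qlow * (1-\<delta>) = ((1+6*\<delta>)*(1-\<delta>))*(2*cS/qlow)" using ql by (simp add: field_simps)
    ultimately have "2*(1+2*\<delta>)*cS/qlow \<le> 2*(1+6*\<delta>)*cS/qlow * (1-\<delta>)" by linarith
    moreover have "0 < 1 - \<delta>" using dh by simp
    ultimately show ?thesis by (subst pos_divide_le_eq) auto
  qed
  also have "\<dots> = (2/qlow + 12*\<delta>/qlow) * cS" using ql by (simp add: field_simps)
  also have "\<dots> \<le> (2/qlow + e) * cS"
  proof -
    have "12*\<delta>/qlow \<le> e" using de ql by (simp add: field_simps)
    then show ?thesis using cS by (intro mult_right_mono) auto
  qed
  finally show ?thesis .
qed



theorem theorem4:
  fixes f0 :: "'a::finite pmf"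
    and q :: "'a pmf \<Rightarrow> real"
    and L qlow \<rho> :: real
    and P1 :: "'a pmf set"
    and cD :: "real \<Rightarrow> nat \<Rightarrow> real"
  assumes qc: "quasiconcave_pmf q"
    and lip: "lipschitz_l1_pmf L q"
    and q0: "q f0 < 0" and qlow: "0 < qlow"
    and P1_ne: "P1 \<noteq> {}" and P1_sub: "P1 \<subseteq> {f. qlow \<le> q f}"
    and rho: "0 < \<rho>"
    and cD_nonneg: "\<And>cS n. 0 < cS \<Longrightarrow> 1 \<le> n \<Longrightarrow> 0 \<le> cD cS n"
    and cD_zero: "\<And>cS n. 0 < cS \<Longrightarrow> 1 \<le> n \<Longrightarrow> real n \<le> (1 + \<rho>) * cS / qlow \<Longrightarrow> cD cS n = 0"
  shows "Limsup at_top (\<lambda>cS::real. WADD f0 P1 (tI q f0 cS (cD cS)) / ennreal cS)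
           \<le> ennreal (2 / qlow)"
proof -
  obtain g1 where g1: "g1 \<in> P1" using P1_ne by auto
  have g1q: "qlow \<le> q g1" using g1 P1_sub by auto
  have Lpos: "0 < L"
  proof (rule ccontr)
    assume nL: "\<not> 0 < L"
    have "\<bar>q g1 - q f0\<bar> \<le> L * (\<Sum>a\<in>UNIV. \<bar>pmf g1 a - pmf f0 a\<bar>)"
      using lip unfolding lipschitz_l1_pmf_def by blast
    moreover have "0 \<le> (\<Sum>a\<in>UNIV. \<bar>pmf g1 a - pmf f0 a\<bar>)" by (simp add: sum_nonneg)
    ultimately have "\<bar>q g1 - q f0\<bar> \<le> 0" using nL by (smt (verit) mult_nonpos_nonneg)
    then show False using g1q q0 qlow by linarith
  qed
  define cd where "cd = real CARD('a)"
  have cdp: "0 < cd" unfolding cd_def by simp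
  show ?thesis
  proof (rule ennreal_le_epsilon)
    fix e :: real assume e: "0 < e"
    define \<delta> where "\<delta> = min (min (\<rho>/3) (1/2)) (e*qlow/12)"
    have d0: "0 < \<delta>" using rho e qlow unfolding \<delta>_def by simp
    have dh: "\<delta> \<le> 1/2" "\<delta> \<le> \<rho>/3" "\<delta> \<le> e*qlow/12" unfolding \<delta>_def by auto
    define qq where "qq = qlow/(1+\<delta>)"
    define \<gamma> where "\<gamma> = qlow - qq"
    have \<gamma>p: "0 < \<gamma>" unfolding \<gamma>_def qq_def using qlow d0 by (simp add: field_simps)
    have qq0: "0 \<le> qq" unfolding qq_def using qlow d0 by simp
    define \<eta> where "\<eta> = \<gamma>/(L*cd)"
    have \<eta>p: "0 < \<eta>" using \<gamma>p Lpos cdp unfolding \<eta>_def by simp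
    define Mx where "Mx = 2*(1+\<delta>)/\<delta> + 1"
    have Mxp: "0 < Mx"
    proof -
      have "0 < 2*(1+\<delta>)/\<delta>" using d0 by (intro divide_pos_pos) auto
      then show ?thesis unfolding Mx_def by linarith
    qed
    define c0 where "c0 = \<delta>/(4*Mx*cd)"
    have c0p: "0 < c0" using d0 Mxp cdp unfolding c0_def by simp
    define \<kappa> where "\<kappa> = \<delta>*\<eta>\<^sup>2/qlow"
    have \<kappa>p: "0 < \<kappa>" using d0 \<eta>p qlow unfolding \<kappa>_def by simp
    define C0 where "C0 = max (max 1 (2*qlow/\<delta>)) (- ln c0/\<kappa>)"
    have close: "qq \<le> q g" if f: "f \<in> P1" and cl: "\<forall>c. \<bar>pmf g c - pmf f c\<bar> < \<eta>" for f g
    proof -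
      have "(\<Sum>c\<in>UNIV. \<bar>pmf g c - pmf f c\<bar>) < (\<Sum>c\<in>(UNIV::'a set). \<eta>)"
        using cl by (intro sum_strict_mono) auto
      then have s: "(\<Sum>c\<in>UNIV. \<bar>pmf g c - pmf f c\<bar>) < cd * \<eta>" unfolding cd_def by simp
      have "\<bar>q g - q f\<bar> \<le> L * (\<Sum>c\<in>UNIV. \<bar>pmf g c - pmf f c\<bar>)"
        using lip unfolding lipschitz_l1_pmf_def by blast
      also have "\<dots> < L * (cd * \<eta>)" using s Lpos by simp
      also have "\<dots> = \<gamma>" unfolding \<eta>_def using Lpos cdp by simp
      finally have "\<bar>q g - q f\<bar> < \<gamma>" .
      moreover have "qlow \<le> q f" using f P1_sub by auto
      ultimately show ?thesis unfolding \<gamma>_def by linarith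
    qed
    have ev: "\<forall>cS\<ge>C0. WADD f0 P1 (tI q f0 cS (cD cS)) / ennreal cS \<le> ennreal (2/qlow + e)"
    proof (intro allI impI)
      fix cS assume cSC: "C0 \<le> cS"
      have cS: "0 < cS" using cSC unfolding C0_def by simp
      have "2*qlow/\<delta> \<le> cS" using cSC unfolding C0_def by simp
      then have y2: "2 \<le> \<delta>*cS/qlow" using d0 qlow by (simp add: field_simps)
      have lnc: "- ln c0/\<kappa> \<le> cS" using cSC unfolding C0_def by simp
      define b where "b = nat \<lfloor>\<delta>*cS/qlow\<rfloor>"
      define M where "M = nat \<lceil>cS/(real b*qq)\<rceil>"
      note P = params[OF qlow d0 cS y2, folded qq_def, folded b_def, folded M_def]
      define p where "p = real (2*M) * real CARD('a) * (2 * exp (-2 * real b * \<eta>\<^sup>2))"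
      have p0: "0 \<le> p" unfolding p_def by simp
      have pd: "p \<le> \<delta>"
      proof -
        have "\<kappa>*cS \<le> 2 * real b * \<eta>\<^sup>2"
        proof -
          have "\<kappa>*cS = 2 * (\<delta>*cS/(2*qlow)) * \<eta>\<^sup>2" unfolding \<kappa>_def using qlow by (simp add: field_simps)
          also have "\<dots> \<le> 2 * real b * \<eta>\<^sup>2" using P(7) by (intro mult_right_mono) auto
          finally show ?thesis .
        qed
        then have "exp (-2 * real b * \<eta>\<^sup>2) \<le> exp (- (\<kappa>*cS))" by simp
        also have "\<dots> \<le> exp (ln c0)"
        proof -
          have "\<kappa> * (- ln c0/\<kappa>) \<le> \<kappa> * cS" using lnc \<kappa>p by (intro mult_left_mono) auto
          moreover have "\<kappa> * (- ln c0/\<kappa>) = - ln c0" using \<kappa>p by simp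
          ultimately have "- ln c0 \<le> \<kappa>*cS" by simp
          then show ?thesis by simp
        qed
        also have "\<dots> = c0" using c0p by simp
        finally have ex: "exp (-2 * real b * \<eta>\<^sup>2) \<le> c0" .
        have "p = 4 * (real M * (cd * exp (-2 * real b * \<eta>\<^sup>2)))" unfolding p_def cd_def by simp
        also have "\<dots> \<le> 4 * (Mx * (cd * c0))"
          using P(6) ex cdp unfolding Mx_def
          by (intro mult_left_mono mult_mono) auto
        also have "\<dots> = \<delta>" unfolding c0_def using Mxp cdp by simp
        finally show ?thesis .
      qed
      have p1: "p < 1" using pd dh by simp
      have cDz: "cD cS n \<le> 0" if "1 \<le> n" "n \<le> M*b + b" for n
      proof -
        have "real n \<le> real (M*b + b)" using that by (simp only: of_nat_le_iff)
        also have "\<dots> \<le> (1+3*\<delta>)*cS/qlow" by (rule P(4))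
        also have "\<dots> \<le> (1+\<rho>)*cS/qlow" using dh cS qlow by (intro divide_right_mono mult_right_mono) auto
        finally show ?thesis using cD_zero[OF cS that(1)] by simp
      qed
      have int_bound: "(\<integral>\<^sup>+Y. delay (tI q f0 cS (cD cS) (\<lambda>l. if l < t1 then x l else Y l)) t1
             \<partial>(PiM (UNIV::nat set) (\<lambda>_. measure_pmf f))) \<le> ennreal ((2/qlow + e)*cS)"
        if f: "f \<in> P1" and t1: "1 \<le> t1" for f t1 x
      proof -
        have "(\<integral>\<^sup>+Y. delay (tI q f0 cS (cD cS) (\<lambda>l. if l < t1 then x l else Y l)) t1 \<partial>muP f)
              \<le> ennreal (real (2*M*b) / (1 - p))"
          by (rule main_bound[OF qc P(1) P(2) qq0 cS P(3) cDz t1 \<eta>p close[OF f] p_def p1])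
        also have "\<dots> \<le> ennreal ((2/qlow + e)*cS)"
          by (rule ennreal_leI, rule ratio_bound[OF qlow d0 dh(1) dh(3) cS _ P(5) p0 pd]) simp
        finally show ?thesis unfolding muP_def .
      qed
      have "WADD f0 P1 (tI q f0 cS (cD cS)) \<le> ennreal ((2/qlow + e)*cS)"
        unfolding WADD_def by (intro SUP_least) (auto intro: int_bound)
      then have "WADD f0 P1 (tI q f0 cS (cD cS)) / ennreal cS \<le> ennreal ((2/qlow + e)*cS) / ennreal cS"
        by (rule divide_right_mono_ennreal)
      also have "\<dots> = ennreal (2/qlow + e)"
        using cS qlow e by (subst divide_ennreal) auto
      finally show "WADD f0 P1 (tI q f0 cS (cD cS)) / ennreal cS \<le> ennreal (2/qlow + e)" .
    qed
    have "Limsup at_top (\<lambda>cS::real. WADD f0 P1 (tI q f0 cS (cD cS)) / ennreal cS) \<le> ennreal (2/qlow + e)"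
      by (rule Limsup_bounded) (use ev in \<open>auto simp: eventually_at_top_linorder\<close>)
    also have "\<dots> = ennreal (2/qlow) + ennreal e" using qlow e by (intro ennreal_plus) auto
    finally show "Limsup at_top (\<lambda>cS::real. WADD f0 P1 (tI q f0 cS (cD cS)) / ennreal cS) \<le> ennreal (2/qlow) + ennreal e" .
  qed
qed

end
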